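(* Let $\mathbf{u}$ be the utility profile of the truth-biased voters, let $\mathbf{a}$ be their truthful ballot vector, and let $\mathbf{a}^P$ be the ballot vector of the principled voters. Let $j=\min\{r\mid c_r\in W(\mathbf{a}+\mathbf{a}^P)\}$. Then $\mathbf{a}$ is a PNE of $(\mathcal{T},R^L,\mathbf{u},\mathbf{a}^P)$ if and only if neither of the following conditions holds: (1) $|W(\mathbf{a}+\mathbf{a}^P)|>1$, and there exist a candidate $c_k\in W(\mathbf{a}+\mathbf{a}^P)$ and a voter $i\in N$ such that $a_i\neq c_k$ and $c_k\succ_i c_j$; (2) $H(\mathbf{a}+\mathbf{a}^P)\neq\emptyset$, and there exist a candidate $c_k\in H(\mathbf{a}+\mathbf{a}^P)$ and a voter $i\in N$ such that $a_i\neq c_k$, $c_k\succ_i c_j$, and $k<j$.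
   Context: Let $C=\{c_1,\dots,c_m\}$ be candidates. There is a set $N=\{1,\dots,n\}$ of truth-biased voters, each with an injective utility function $u_i:C\to\mathbb{N}$ inducing $c\succ_i c'$ iff $u_i(c)>u_i(c')$; $a_i$ is $i$'s top candidate and $\mathbf{a}=(a_1,\dots,a_n)$. There is also a set $P=\{n+1,\dots,n+s\}$ of principled voters, who are not players and always vote for their top candidate; their ballot vector is $\mathbf{a}^P\in C^s$. A ballot vector of the truth-biased voters is $\mathbf{b}=(b_1,\dots,b_n)$, $b_i\in C\cup\{\bot\}$; $\mathbf{b}+\mathbf{a}^P$ is the combined ballot vector. For a ballot vector $\mathbf{x}$, $\mathrm{sc}(c,\mathbf{x})$ is the number of ballots for $c$, $M(\mathbf{x})=\max_c\mathrm{sc}(c,\mathbf{x})$, $W(\mathbf{x})=\{c:\mathrm{sc}(c,\mathbf{x})=M(\mathbf{x})\}$, $H(\mathbf{x})=\{c:\mathrm{sc}(c,\mathbf{x})=M(\mathbf{x})-1\}$. Under lexicographic tie-breaking $R^L$ the winner of $\mathbf{b}+\mathbf{a}^P$ is the $c_r\in W(\mathbf{b}+\mathbf{a}^P)$ with smallest index $r$. Fix $0<\varepsilon<\min\{1/m,1/n\}$. If $c$ is the winner, truth-biased voter $i$'s utility is $u_i(c)$ if $b_i\in C\setminus\{a_i\}$, $u_i(c)+\varepsilon$ if $b_i=a_i$, and $-\infty$ if $b_i=\bot$. The game $(\mathcal{T},R^L,\mathbf{u},\mathbf{a}^P)$ has players $N$ with action sets $C\cup\{\bot\}$; a PNE is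 a ballot vector $\mathbf{b}$ from which no voter in $N$ can strictly increase her utility by unilaterally changing her ballot. *)

theory Defs
  imports Main "HOL-Library.Extended_Real"
begin

(* Candidates c_1..c_m are represented by the indices 1..m.
   Truth-biased voters are 1..n, principled voters are n+1..n+s.
   A ballot of a truth-biased voter is a nat option (None = abstention \<bottom>).
   u i c is the (natural-number) utility of voter i for candidate c.
   aP i is the candidate voted for by principled voter i. *)

definition valid_ballot :: "nat \<Rightarrow> nat option \<Rightarrow> bool" where
  "valid_ballot m x \<longleftrightarrow> x = None \<or> (\<exists>c\<in>{1..m}. x = Some c)"

definition score :: "nat \<Rightarrow> nat \<Rightarrow> (nat \<Rightarrow> nat option) \<Rightarrow> (nat \<Rightarrow> nat) \<Rightarrow> nat \<Rightarrow> nat" where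
  "score n s b aP c = card {i\<in>{1..n}. b i = Some c} + card {i\<in>{n+1..n+s}. aP i = c}"

definition maxscore :: "nat \<Rightarrow> nat \<Rightarrow> nat \<Rightarrow> (nat \<Rightarrow> nat option) \<Rightarrow> (nat \<Rightarrow> nat) \<Rightarrow> nat" where
  "maxscore m n s b aP = Max (score n s b aP ` {1..m})"

definition winners :: "nat \<Rightarrow> nat \<Rightarrow> nat \<Rightarrow> (nat \<Rightarrow> nat option) \<Rightarrow> (nat \<Rightarrow> nat) \<Rightarrow> nat set" where
  "winners m n s b aP = {c\<in>{1..m}. score n s b aP c = maxscore m n s b aP}"

definition hopefuls :: "nat \<Rightarrow> nat \<Rightarrow> nat \<Rightarrow> (nat \<Rightarrow> nat option) \<Rightarrow> (nat \<Rightarrow> nat) \<Rightarrow> nat set" where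
  "hopefuls m n s b aP = {c\<in>{1..m}. int (score n s b aP c) = int (maxscore m n s b aP) - 1}"

definition lex_winner :: "nat \<Rightarrow> nat \<Rightarrow> nat \<Rightarrow> (nat \<Rightarrow> nat option) \<Rightarrow> (nat \<Rightarrow> nat) \<Rightarrow> nat" where
  "lex_winner m n s b aP = (LEAST r. r \<in> winners m n s b aP)"

definition top :: "nat \<Rightarrow> (nat \<Rightarrow> nat \<Rightarrow> nat) \<Rightarrow> nat \<Rightarrow> nat" where
  "top m u i = (THE c. c \<in> {1..m} \<and> (\<forall>c'\<in>{1..m}. u i c' \<le> u i c))"

definition truthful :: "nat \<Rightarrow> (nat \<Rightarrow> nat \<Rightarrow> nat) \<Rightarrow> nat \<Rightarrow> nat option" where
  "truthful m u = (\<lambda>i. Some (top m u i))"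

definition utility :: "nat \<Rightarrow> nat \<Rightarrow> nat \<Rightarrow> real \<Rightarrow> (nat \<Rightarrow> nat \<Rightarrow> nat) \<Rightarrow> (nat \<Rightarrow> nat)
    \<Rightarrow> (nat \<Rightarrow> nat option) \<Rightarrow> nat \<Rightarrow> ereal" where
  "utility m n s eps u aP b i =
     (case b i of
        None \<Rightarrow> -\<infinity>
      | Some c \<Rightarrow> ereal (real (u i (lex_winner m n s b aP)) + (if c = top m u i then eps else 0)))"

definition is_PNE :: "nat \<Rightarrow> nat \<Rightarrow> nat \<Rightarrow> real \<Rightarrow> (nat \<Rightarrow> nat \<Rightarrow> nat) \<Rightarrow> (nat \<Rightarrow> nat)
    \<Rightarrow> (nat \<Rightarrow> nat option) \<Rightarrow> bool" where
  "is_PNE m n s eps u aP b \<longleftrightarrow>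
     (\<forall>i\<in>{1..n}. valid_ballot m (b i)) \<and>
     (\<forall>i\<in>{1..n}. \<forall>x. valid_ballot m x \<longrightarrow>
         utility m n s eps u aP (b(i := x)) i \<le> utility m n s eps u aP b i)"

end

theory Submission
  imports Defs
begin

lemma score_upd:
  assumes "i \<in> {1..n}" "b i = Some e" "c \<noteq> e"
  shows "score n s (b(i:=Some c)) aP d = (if d = c then score n s b aP d + 1 else if d = e then score n s b aP d - 1 else score n s b aP d)"
proof -
  have fin: "finite {i'\<in>{1..n}. b i' = Some x}" for x by simp
  have ie: "i \<in> {i'\<in>{1..n}. b i' = Some e}" using assms by simp
  have ge: "card {i'\<in>{1..n}. b i' = Some e} \<ge> 1"
  proof -
    have "card {i'\<in>{1..n}. b i' = Some e} \<noteq> 0" using fin[of e] ie by (metis card_0_eq empty_iff)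
    then show ?thesis by linarith
  qed
  show ?thesis
  proof (cases "d = c")
    case True
    have "{i'\<in>{1..n}. (b(i:=Some c)) i' = Some d} = insert i {i'\<in>{1..n}. b i' = Some d}"
      using assms True by auto
    moreover have "i \<notin> {i'\<in>{1..n}. b i' = Some d}" using assms True by auto
    ultimately show ?thesis using True fin by (simp add: score_def)
  next
    case False
    show ?thesis
    proof (cases "d = e")
      case True
      have "{i'\<in>{1..n}. (b(i:=Some c)) i' = Some d} = {i'\<in>{1..n}. b i' = Some d} - {i}"
        using assms True by auto
      then show ?thesis using True False fin ie ge by (simp add: score_def)
    next
      case F2: False
      have "{i'\<in>{1..n}. (b(i:=Some c)) i' = Some d} = {i'\<in>{1..n}. b i' = Some d}"
        using assms False F2 by auto
      then show ?thesis using False F2 by (simp add: score_def)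
    qed
  qed
qed

lemma score_pos:
  assumes "i \<in> {1..n}" "b i = Some e"
  shows "score n s b aP e \<ge> 1"
proof -
  have "i \<in> {i'\<in>{1..n}. b i' = Some e}" using assms by simp
  moreover have "finite {i'\<in>{1..n}. b i' = Some e}" by simp
  ultimately have "card {i'\<in>{1..n}. b i' = Some e} \<noteq> 0" by (metis card_0_eq empty_iff)
  then have "card {i'\<in>{1..n}. b i' = Some e} \<ge> 1" by linarith
  then show ?thesis unfolding score_def by linarith
qed

lemma lex_char:
  fixes f :: "nat \<Rightarrow> nat"
  assumes "w \<in> {1..m}" "\<forall>d\<in>{1..m}. f d \<le> f w" "\<forall>d\<in>{1..m}. d < w \<longrightarrow> f d < f w"
  shows "(LEAST r. r \<in> {c\<in>{1..m}. f c = Max (f ` {1..m})}) = w"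
proof -
  have mx: "Max (f ` {1..m}) = f w"
    using assms by (intro Max_eqI) auto
  show ?thesis unfolding mx
    apply (rule Least_equality)
    using assms by (auto simp: not_less[symmetric])
qed

lemma lex_in:
  fixes f :: "nat \<Rightarrow> nat"
  assumes "m \<ge> 1"
  shows "(LEAST r. r \<in> {c\<in>{1..m}. f c = Max (f ` {1..m})}) \<in> {c\<in>{1..m}. f c = Max (f ` {1..m})}"
proof (rule LeastI_ex)
  have "Max (f ` {1..m}) \<in> f ` {1..m}" using assms by (intro Max_in) auto
  then show "\<exists>x. x \<in> {c\<in>{1..m}. f c = Max (f ` {1..m})}" by auto
qed

lemma top_prop:
  assumes "m \<ge> 1" "inj_on (u i) {1..m}"
  shows "top m u i \<in> {1..m} \<and> (\<forall>c\<in>{1..m}. c \<noteq> top m u i \<longrightarrow> u i c < u i (top m u i))"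
proof -
  have "Max (u i ` {1..m}) \<in> u i ` {1..m}" using assms by (intro Max_in) auto
  then obtain c where c: "c \<in> {1..m}" "u i c = Max (u i ` {1..m})" by auto
  have cm: "\<forall>c'\<in>{1..m}. u i c' \<le> u i c" using c by simp
  have "top m u i = c" unfolding top_def
  proof (rule the_equality)
    show "c \<in> {1..m} \<and> (\<forall>c'\<in>{1..m}. u i c' \<le> u i c)" using c cm by simp
  next
    fix x assume x: "x \<in> {1..m} \<and> (\<forall>c'\<in>{1..m}. u i c' \<le> u i x)"
    then have "u i x = u i c" using cm c by (meson le_antisym)
    then show "x = c" using assms(2) x c by (meson inj_onD)
  qed
  then show ?thesis using c cm assms(2)
    by (metis inj_onD le_neq_implies_less)
qed

theorem proposition9:
  fixes m n s :: nat and eps :: real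
    and u :: "nat \<Rightarrow> nat \<Rightarrow> nat" and aP :: "nat \<Rightarrow> nat"
  assumes "m \<ge> 1" and "n \<ge> 1"
    and "\<forall>i\<in>{1..n}. inj_on (u i) {1..m}"
    and "\<forall>i\<in>{n+1..n+s}. aP i \<in> {1..m}"
    and "0 < eps" and "eps < 1 / real m" and "eps < 1 / real n"
  shows "let a = truthful m u;
             W = winners m n s a aP;
             H = hopefuls m n s a aP;
             j = (LEAST r. r \<in> W)
         in is_PNE m n s eps u aP a \<longleftrightarrow>
            \<not> (card W > 1 \<and> (\<exists>k\<in>W. \<exists>i\<in>{1..n}. top m u i \<noteq> k \<and> u i k > u i j)) \<and>
            \<not> (H \<noteq> {} \<and> (\<exists>k\<in>H. \<exists>i\<in>{1..n}. top m u i \<noteq> k \<and> u i k > u i j \<and> k < j))"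
proof -
  define a where "a = truthful m u"
  define sc where "sc = score n s a aP"
  define M where "M = maxscore m n s a aP"
  define W where "W = winners m n s a aP"
  define H where "H = hopefuls m n s a aP"
  define j where "j = (LEAST r. r \<in> W)"
  define t where "t = top m u"
  have top: "\<And>i. i\<in>{1..n} \<Longrightarrow> t i \<in> {1..m} \<and> (\<forall>c\<in>{1..m}. c \<noteq> t i \<longrightarrow> u i c < u i (t i))"
    using top_prop assms(1,3) unfolding t_def by blast
  have ai: "\<And>i. a i = Some (t i)" unfolding a_def truthful_def t_def by simp
  have Mdef: "M = Max (sc ` {1..m})" unfolding M_def maxscore_def sc_def by simp
  have Wdef: "W = {c\<in>{1..m}. sc c = M}" unfolding W_def winners_def sc_def M_def by simp
  have Hdef: "H = {c\<in>{1..m}. int (sc c) = int M - 1}" unfolding H_def hopefuls_def sc_def M_def by simp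
  have jW: "j \<in> W" unfolding j_def Wdef Mdef using lex_in[OF assms(1)] by blast
  have scle: "\<forall>d\<in>{1..m}. sc d \<le> M" unfolding Mdef by simp
  have jl: "\<forall>d\<in>{1..m}. d < j \<longrightarrow> sc d < M"
  proof (intro ballI impI)
    fix d assume d: "d \<in> {1..m}" "d < j"
    then have "d \<notin> W" unfolding j_def using not_less_Least by blast
    then show "sc d < M" using d scle Wdef by force
  qed
  have jlw: "lex_winner m n s a aP = j"
    unfolding lex_winner_def j_def W_def by simp
  have eps1: "eps < 1"
  proof -
    have "1 / real m \<le> 1" using assms(1) by simp
    then show ?thesis using assms(6) by linarith
  qed
  have ua: "\<And>i. utility m n s eps u aP a i = ereal (real (u i j) + eps)"
    unfolding utility_def using ai jlw t_def by simp
  have key: "(utility m n s eps u aP (a(i:=Some c)) i \<le> utility m n s eps u aP a i) \<longleftrightarrow>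
      \<not>((c \<in> W \<and> u i c > u i j) \<or> (c \<in> H \<and> u i c > u i j \<and> c < j))"
    if i: "i\<in>{1..n}" and c: "c\<in>{1..m}" and ct: "c \<noteq> t i" for i c
  proof -
    define b' where "b' = a(i:=Some c)"
    define w' where "w' = lex_winner m n s b' aP"
    define f' where "f' = score n s b' aP"
    have f': "\<And>d. f' d = (if d = c then sc d + 1 else if d = t i then sc d - 1 else sc d)"
      unfolding f'_def b'_def sc_def using score_upd[where b=a and e="t i", OF i ai[of i] ct] by blast
    have w'lw: "w' = (LEAST r. r \<in> {c\<in>{1..m}. f' c = Max (f' ` {1..m})})"
      unfolding w'_def lex_winner_def winners_def maxscore_def f'_def by simp
    have w'in: "w' \<in> {1..m}" using lex_in[OF assms(1), of f'] w'lw by auto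
    have ub': "utility m n s eps u aP b' i = ereal (real (u i w'))"
      unfolding utility_def w'_def b'_def using ct t_def by simp
    have equiv: "(utility m n s eps u aP b' i \<le> utility m n s eps u aP a i) \<longleftrightarrow> u i w' \<le> u i j"
    proof -
      have "(utility m n s eps u aP b' i \<le> utility m n s eps u aP a i) \<longleftrightarrow> real (u i w') \<le> real (u i j) + eps"
        using ub' ua by simp
      also have "\<dots> \<longleftrightarrow> u i w' \<le> u i j"
      proof
        assume h: "real (u i w') \<le> real (u i j) + eps"
        show "u i w' \<le> u i j"
        proof (rule ccontr)
          assume "\<not> u i w' \<le> u i j"
          then have "real (u i w') \<ge> real (u i j) + 1" by simp
          then show False using h eps1 by linarith
        qed
      next
        assume "u i w' \<le> u i j" then show "real (u i w') \<le> real (u i j) + eps" using assms(5) by simp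
      qed
      finally show ?thesis .
    qed
    have sct: "sc (t i) \<ge> 1" unfolding sc_def using score_pos[where b=a and e="t i", OF i ai[of i]] .
    have topi: "t i \<in> {1..m}" "\<forall>c\<in>{1..m}. c \<noteq> t i \<longrightarrow> u i c < u i (t i)" using top[OF i] by auto
    show ?thesis
    proof (cases "c \<in> W")
      case True
      have "w' = c" unfolding w'lw
      proof (rule lex_char)
        show "c \<in> {1..m}" by fact
        show "\<forall>d\<in>{1..m}. f' d \<le> f' c" using f' scle True Wdef by auto
        show "\<forall>d\<in>{1..m}. d < c \<longrightarrow> f' d < f' c" using f' scle True Wdef topi(1) by (force simp: le_imp_less_Suc)
      qed
      then show ?thesis using equiv b'_def True by auto
    next
      case notW: False
      show ?thesis
      proof (cases "c \<in> H \<and> c < j \<and> t i \<noteq> j")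
        case True
        have scc: "sc c + 1 = M" using True Hdef by auto
        have "w' = c" unfolding w'lw
        proof (rule lex_char)
          show "c \<in> {1..m}" by fact
          show "\<forall>d\<in>{1..m}. f' d \<le> f' c"
          proof
            fix d assume "d \<in> {1..m}"
            then have "sc d \<le> M" using scle by auto
            then show "f' d \<le> f' c" using f' scc by auto
          qed
          show "\<forall>d\<in>{1..m}. d < c \<longrightarrow> f' d < f' c"
          proof (intro ballI impI)
            fix d assume d: "d \<in> {1..m}" "d < c"
            then have "sc d < M" using jl True by auto
            then show "f' d < f' c" using f' scc d by auto
          qed
        qed
        then show ?thesis using equiv b'_def True notW by auto
      next
        case False
        have rhs: "\<not>((c \<in> W \<and> u i c > u i j) \<or> (c \<in> H \<and> u i c > u i j \<and> c < j))"
        proof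
          assume "(c \<in> W \<and> u i c > u i j) \<or> (c \<in> H \<and> u i c > u i j \<and> c < j)"
          then have h: "c \<in> H" "u i c > u i j" "c < j" using notW by auto
          then have "t i \<noteq> j" using topi c ct by auto
          then show False using False h by auto
        qed
        have "u i w' \<le> u i j"
        proof (cases "t i = j")
          case True
          then show ?thesis using topi w'in by (metis less_imp_le order_refl)
        next
          case tj: False
          have jm: "j \<in> {1..m}" "sc j = M" using jW Wdef by auto
          have jc: "j \<noteq> c" using jW notW by auto
          have "w' = j" unfolding w'lw
          proof (rule lex_char)
            show "j \<in> {1..m}" by fact
            show "\<forall>d\<in>{1..m}. f' d \<le> f' j"
            proof (intro ballI)
              fix d assume d: "d \<in> {1..m}"
              show "f' d \<le> f' j"
              proof (cases "d = c")
                case True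
                then have "sc d < M" using notW d scle Wdef by force
                then show ?thesis using f' True jc tj jm by auto
              next
                case False
                have "sc d \<le> M" using scle d by auto
                then show ?thesis using f' jc tj jm False by auto
              qed
            qed
            show "\<forall>d\<in>{1..m}. d < j \<longrightarrow> f' d < f' j"
            proof (intro ballI impI)
              fix d assume d: "d \<in> {1..m}" "d < j"
              have sd: "sc d < M" using jl d by auto
              show "f' d < f' j"
              proof (cases "d = c")
                case True
                then have "c \<notin> H" using False tj d by auto
                then have "int (sc c) \<noteq> int M - 1" using Hdef c by auto
                moreover have "sc c < M" using sd True by simp
                ultimately have "sc c + 1 < M" by linarith
                then show ?thesis using f' True jc tj jm by auto
              next
                case F2: False
                then show ?thesis using f' jc tj jm sd by auto
              qed
            qed
          qed
          then show ?thesis by simp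
        qed
        then show ?thesis using equiv b'_def rhs by auto
      qed
    qed
  qed
  have vb: "\<forall>i\<in>{1..n}. valid_ballot m (a i)" using top ai valid_ballot_def by auto
  have PNE: "is_PNE m n s eps u aP a \<longleftrightarrow> (\<forall>i\<in>{1..n}. \<forall>c\<in>{1..m}. c \<noteq> t i \<longrightarrow>
        \<not>((c \<in> W \<and> u i c > u i j) \<or> (c \<in> H \<and> u i c > u i j \<and> c < j)))"
  proof
    assume P: "is_PNE m n s eps u aP a"
    show "\<forall>i\<in>{1..n}. \<forall>c\<in>{1..m}. c \<noteq> t i \<longrightarrow> \<not>((c \<in> W \<and> u i c > u i j) \<or> (c \<in> H \<and> u i c > u i j \<and> c < j))"
    proof (intro ballI impI)
      fix i c assume i: "i \<in> {1..n}" and c: "c \<in> {1..m}" and ct: "c \<noteq> t i"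
      have "valid_ballot m (Some c)" using c valid_ballot_def by auto
      then have "utility m n s eps u aP (a(i:=Some c)) i \<le> utility m n s eps u aP a i"
        using P i unfolding is_PNE_def by blast
      then show "\<not>((c \<in> W \<and> u i c > u i j) \<or> (c \<in> H \<and> u i c > u i j \<and> c < j))"
        using key[OF i c ct] by blast
    qed
  next
    assume R: "\<forall>i\<in>{1..n}. \<forall>c\<in>{1..m}. c \<noteq> t i \<longrightarrow> \<not>((c \<in> W \<and> u i c > u i j) \<or> (c \<in> H \<and> u i c > u i j \<and> c < j))"
    show "is_PNE m n s eps u aP a" unfolding is_PNE_def
    proof (intro conjI vb ballI allI impI)
      fix i x assume i: "i \<in> {1..n}" and x: "valid_ballot m x"
      show "utility m n s eps u aP (a(i := x)) i \<le> utility m n s eps u aP a i"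
      proof (cases x)
        case None
        then show ?thesis unfolding utility_def by simp
      next
        case (Some c)
        then have c: "c \<in> {1..m}" using x valid_ballot_def by auto
        show ?thesis
        proof (cases "c = t i")
          case True
          then have "a(i := x) = a" using Some ai by auto
          then show ?thesis by simp
        next
          case False
          then show ?thesis using key[OF i c False] R i c Some by blast
        qed
      qed
    qed
  qed
  have finW: "finite W" using Wdef by simp
  have cond1: "(card W > 1 \<and> (\<exists>k\<in>W. \<exists>i\<in>{1..n}. t i \<noteq> k \<and> u i k > u i j))
      \<longleftrightarrow> (\<exists>k\<in>W. \<exists>i\<in>{1..n}. t i \<noteq> k \<and> u i k > u i j)"
  proof
    assume "\<exists>k\<in>W. \<exists>i\<in>{1..n}. t i \<noteq> k \<and> u i k > u i j"
    then obtain k where k: "k \<in> W" "k \<noteq> j" by force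
    have "{k, j} \<subseteq> W" using k jW by auto
    then have "card {k, j} \<le> card W" using finW card_mono by blast
    then have "card W > 1" using k by simp
    then show "card W > 1 \<and> (\<exists>k\<in>W. \<exists>i\<in>{1..n}. t i \<noteq> k \<and> u i k > u i j)"
      using \<open>\<exists>k\<in>W. _\<close> by blast
  qed simp
  have main: "is_PNE m n s eps u aP a \<longleftrightarrow>
            \<not> (card W > 1 \<and> (\<exists>k\<in>W. \<exists>i\<in>{1..n}. t i \<noteq> k \<and> u i k > u i j)) \<and>
            \<not> (H \<noteq> {} \<and> (\<exists>k\<in>H. \<exists>i\<in>{1..n}. t i \<noteq> k \<and> u i k > u i j \<and> k < j))"
  proof -
    have "W \<subseteq> {1..m}" "H \<subseteq> {1..m}" using Wdef Hdef by auto
    then show ?thesis unfolding PNE cond1 by (auto; fastforce)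
  qed
  show ?thesis unfolding Let_def using main unfolding a_def W_def H_def j_def t_def by simp
qed

end
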